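(* Let $p$ be a prime and $G$ a non-abelian group of order $p^m$ with $|Z(G)|=p^{m-2}$. Then $\mathrm{Spec}(\Gamma_G)=\{[0]^{(p+1)((p-1)p^{m-3}-1)},[-(p-1)p^{m-3}]^{p},[(p-1)p^{m-2}]^1\}$, $\mathrm{L\text{-}Spec}(\Gamma_G)=\{[0]^1,[(p-1)p^{m-2}]^{(p+1)((p-1)p^{m-3}-1)},[(p^2-1)p^{m-3}]^{p}\}$, $\mathrm{Q\text{-}Spec}(\Gamma_G)=\{[(p-1)p^{m-2}]^{(p+1)((p-1)p^{m-3}-1)},[(p-1)^2p^{m-3}]^{p},[2(p-1)p^{m-2}]^1\}$, and $E(\Gamma_G)=LE(\Gamma_G)=SE(\Gamma_G)=2(p-1)p^{m-2}$.
   Context: For a finite non-abelian group $G$ with center $Z(G)$ and $x\in G$, $x^G$ is the conjugacy class of $x$. The NCCC-graph $\Gamma_G$ is the simple graph with vertex set $\{x^G: x\in G\setminus Z(G)\}$, distinct vertices $x^G,y^G$ adjacent iff $x'y'\neq y'x'$ for all $x'\in x^G,y'\in y^G$. For a simple graph with adjacency matrix $A$, degree matrix $D$, $L=D-A$, $Q=D+A$; Spec, L-Spec, Q-Spec are the eigenvalue multisets of $A,L,Q$, written with $[\lambda]^k$ meaning eigenvalue $\lambda$ of multiplicity $k$. $E=\sum_{\lambda\in\mathrm{Spec}}|\lambda|$; with $\Delta=2|E(\mathcal G)|/|V(\mathcal G)|$, $LE=\sum_{\beta\in\mathrm{L\text{-}Spec}}|\beta-\Delta|$, $SE=\sum_{\gamma\in\mathrm{Q\text{-}Spec}}|\gamma-\Delta|$.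 *)

theory Defs
  imports "HOL-Algebra.Group" "Jordan_Normal_Form.Char_Poly"
begin

definition grp_center :: "('a, 'b) monoid_scheme \<Rightarrow> 'a set" where
  "grp_center G = {z \<in> carrier G. \<forall>g \<in> carrier G. z \<otimes>\<^bsub>G\<^esub> g = g \<otimes>\<^bsub>G\<^esub> z}"

definition conj_class :: "('a, 'b) monoid_scheme \<Rightarrow> 'a \<Rightarrow> 'a set" where
  "conj_class G x = {g \<otimes>\<^bsub>G\<^esub> x \<otimes>\<^bsub>G\<^esub> inv\<^bsub>G\<^esub> g | g. g \<in> carrier G}"

definition nccc_vertices :: "('a, 'b) monoid_scheme \<Rightarrow> 'a set set" where
  "nccc_vertices G = {conj_class G x | x. x \<in> carrier G - grp_center G}"

definition nccc_adj :: "('a, 'b) monoid_scheme \<Rightarrow> 'a set \<Rightarrow> 'a set \<Rightarrow> bool" where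
  "nccc_adj G X Y \<longleftrightarrow> X \<noteq> Y \<and>
     (\<forall>x \<in> X. \<forall>y \<in> Y. x \<otimes>\<^bsub>G\<^esub> y \<noteq> y \<otimes>\<^bsub>G\<^esub> x)"

text \<open>A fixed (arbitrary) enumeration of the vertex set; spectra do not depend on it.\<close>
definition vertex_enum :: "'v set \<Rightarrow> nat \<Rightarrow> 'v" where
  "vertex_enum V = (SOME f. bij_betw f {..<card V} V)"

definition graph_degree :: "'v set \<Rightarrow> ('v \<Rightarrow> 'v \<Rightarrow> bool) \<Rightarrow> 'v \<Rightarrow> nat" where
  "graph_degree V E v = card {w \<in> V. E v w}"

definition adj_mat :: "'v set \<Rightarrow> ('v \<Rightarrow> 'v \<Rightarrow> bool) \<Rightarrow> real mat" where
  "adj_mat V E = mat (card V) (card V)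
     (\<lambda>(i, j). if E (vertex_enum V i) (vertex_enum V j) then 1 else 0)"

definition deg_mat :: "'v set \<Rightarrow> ('v \<Rightarrow> 'v \<Rightarrow> bool) \<Rightarrow> real mat" where
  "deg_mat V E = mat (card V) (card V)
     (\<lambda>(i, j). if i = j then real (graph_degree V E (vertex_enum V i)) else 0)"

definition lap_mat :: "'v set \<Rightarrow> ('v \<Rightarrow> 'v \<Rightarrow> bool) \<Rightarrow> real mat" where
  "lap_mat V E = deg_mat V E - adj_mat V E"

definition slap_mat :: "'v set \<Rightarrow> ('v \<Rightarrow> 'v \<Rightarrow> bool) \<Rightarrow> real mat" where
  "slap_mat V E = deg_mat V E + adj_mat V E"

definition mat_spec :: "real mat \<Rightarrow> real multiset" where
  "mat_spec A = proots (char_poly A)"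

definition graph_edges :: "'v set \<Rightarrow> ('v \<Rightarrow> 'v \<Rightarrow> bool) \<Rightarrow> 'v set set" where
  "graph_edges V E = {{u, v} | u v. u \<in> V \<and> v \<in> V \<and> E u v}"

definition avg_deg :: "'v set \<Rightarrow> ('v \<Rightarrow> 'v \<Rightarrow> bool) \<Rightarrow> real" where
  "avg_deg V E = 2 * real (card (graph_edges V E)) / real (card V)"

definition graph_energy :: "'v set \<Rightarrow> ('v \<Rightarrow> 'v \<Rightarrow> bool) \<Rightarrow> real" where
  "graph_energy V E = sum_mset (image_mset abs (mat_spec (adj_mat V E)))"

definition lap_energy :: "'v set \<Rightarrow> ('v \<Rightarrow> 'v \<Rightarrow> bool) \<Rightarrow> real" where
  "lap_energy V E = sum_mset (image_mset (\<lambda>b. \<bar>b - avg_deg V E\<bar>) (mat_spec (lap_mat V E)))"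

definition slap_energy :: "'v set \<Rightarrow> ('v \<Rightarrow> 'v \<Rightarrow> bool) \<Rightarrow> real" where
  "slap_energy V E = sum_mset (image_mset (\<lambda>c. \<bar>c - avg_deg V E\<bar>) (mat_spec (slap_mat V E)))"

end

theory Submission
  imports Defs "HOL-Algebra.Group_Action" "HOL-Algebra.Generated_Groups" "HOL-Computational_Algebra.Primes"
    "Jordan_Normal_Form.Schur_Decomposition" "Jordan_Normal_Form.Jordan_Normal_Form_Uniqueness"
begin


definition gm :: "nat \<Rightarrow> (nat \<Rightarrow> 'p) \<Rightarrow> 'a::comm_ring_1 mat" where
  "gm N g = mat N N (\<lambda>(i,j). if g i \<noteq> g j then 1 else 0)"

definition jm :: "nat \<Rightarrow> 'a::comm_ring_1 mat" where
  "jm N = mat N N (\<lambda>_. 1)"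

lemma sum_ind_card: "finite A \<Longrightarrow> (\<Sum>l\<in>A. if P l then 1 else 0) = (of_nat (card {l\<in>A. P l}) :: 'a::comm_semiring_1)"
  by (simp add: sum.If_cases Int_def)

lemma gm_sq:
  assumes fib: "\<And>i. i < N \<Longrightarrow> card {l. l < N \<and> g l = g i} = n"
  shows "(gm N g :: 'a::comm_ring_1 mat) * gm N g = of_nat (N - n) \<cdot>\<^sub>m jm N - of_nat n \<cdot>\<^sub>m gm N g"
proof (rule eq_matI)
  fix i j assume i: "i < dim_row (of_nat (N - n) \<cdot>\<^sub>m jm N - of_nat n \<cdot>\<^sub>m (gm N g :: 'a mat))"
    and j: "j < dim_col (of_nat (N - n) \<cdot>\<^sub>m jm N - of_nat n \<cdot>\<^sub>m (gm N g :: 'a mat))"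
  hence i: "i < N" and j: "j < N" by (auto simp: gm_def jm_def)
  have "(gm N g * gm N g :: 'a mat) $$ (i,j) = (\<Sum>l<N. (if g i \<noteq> g l then 1 else 0) * (if g l \<noteq> g j then 1 else 0))"
    using i j by (simp add: gm_def scalar_prod_def lessThan_atLeast0)
  also have "\<dots> = (\<Sum>l\<in>{..<N}. if g l \<noteq> g i \<and> g l \<noteq> g j then 1 else 0)"
    by (rule sum.cong) auto
  also have "\<dots> = of_nat (card {l\<in>{..<N}. g l \<noteq> g i \<and> g l \<noteq> g j})"
    by (rule sum_ind_card) simp
  finally have L: "(gm N g * gm N g :: 'a mat) $$ (i,j) = of_nat (card {l\<in>{..<N}. g l \<noteq> g i \<and> g l \<noteq> g j})" .
  have eq: "{l\<in>{..<N}. g l \<noteq> g i \<and> g l \<noteq> g j} = {..<N} - ({l. l < N \<and> g l = g i} \<union> {l. l < N \<and> g l = g j})"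
    by auto
  have sub: "{l. l < N \<and> g l = g i} \<union> {l. l < N \<and> g l = g j} \<subseteq> {..<N}" by auto
  have fin: "finite ({l. l < N \<and> g l = g i} \<union> {l. l < N \<and> g l = g j})" by auto
  have cU: "card ({l. l < N \<and> g l = g i} \<union> {l. l < N \<and> g l = g j}) \<le> N"
    using card_mono[OF _ sub] by simp
  show "(gm N g * gm N g :: 'a mat) $$ (i,j) = (of_nat (N - n) \<cdot>\<^sub>m jm N - of_nat n \<cdot>\<^sub>m (gm N g :: 'a mat)) $$ (i,j)"
  proof (cases "g i = g j")
    case True
    hence "{l. l < N \<and> g l = g i} \<union> {l. l < N \<and> g l = g j} = {l. l < N \<and> g l = g i}" by auto
    hence "card {l\<in>{..<N}. g l \<noteq> g i \<and> g l \<noteq> g j} = N - n"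
      unfolding eq using card_Diff_subset[OF fin sub] fib[OF i] by simp
    then show ?thesis using L i j True by (simp add: gm_def jm_def)
  next
    case False
    hence disj: "{l. l < N \<and> g l = g i} \<inter> {l. l < N \<and> g l = g j} = {}" by auto
    hence cu: "card ({l. l < N \<and> g l = g i} \<union> {l. l < N \<and> g l = g j}) = n + n"
      using card_Un_disjoint[of "{l. l < N \<and> g l = g i}" "{l. l < N \<and> g l = g j}"] fib[OF i] fib[OF j] by auto
    hence "card {l\<in>{..<N}. g l \<noteq> g i \<and> g l \<noteq> g j} = N - (n + n)"
      unfolding eq using card_Diff_subset[OF fin sub] by simp
    moreover have "n + n \<le> N" using cU cu by simp
    ultimately show ?thesis using L i j False by (simp add: gm_def jm_def of_nat_diff)
  qed
qed (auto simp: gm_def jm_def)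

lemma gm_j:
  assumes fib: "\<And>i. i < N \<Longrightarrow> card {l. l < N \<and> g l = g i} = n"
  shows "(gm N g :: 'a::comm_ring_1 mat) * jm N = of_nat (N - n) \<cdot>\<^sub>m jm N"
proof (rule eq_matI)
  fix i j assume i: "i < dim_row (of_nat (N - n) \<cdot>\<^sub>m (jm N :: 'a mat))"
    and j: "j < dim_col (of_nat (N - n) \<cdot>\<^sub>m (jm N :: 'a mat))"
  hence i: "i < N" and j: "j < N" by (auto simp: jm_def)
  have "(gm N g * jm N :: 'a mat) $$ (i,j) = (\<Sum>l\<in>{..<N}. if g l \<noteq> g i then 1 else 0)"
    using i j by (auto simp: gm_def jm_def scalar_prod_def lessThan_atLeast0 intro!: sum.cong)
  also have "\<dots> = of_nat (card {l\<in>{..<N}. g l \<noteq> g i})"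
    by (rule sum_ind_card) simp
  also have "{l\<in>{..<N}. g l \<noteq> g i} = {..<N} - {l. l < N \<and> g l = g i}" by auto
  also have "card \<dots> = N - n" using card_Diff_subset[of "{l. l < N \<and> g l = g i}" "{..<N}"] fib[OF i] by auto
  finally show "(gm N g * jm N :: 'a mat) $$ (i,j) = (of_nat (N - n) \<cdot>\<^sub>m (jm N :: 'a mat)) $$ (i,j)"
    using i j by (simp add: jm_def)
qed (auto simp: gm_def jm_def)


lemma smult_mat_mult_mat_vec_assoc: "dim_vec v = dim_col A \<Longrightarrow> (k \<cdot>\<^sub>m A) *\<^sub>v v = k \<cdot>\<^sub>v (A *\<^sub>v (v :: 'a::comm_ring vec))"
  by (rule eq_vecI) (auto simp: scalar_prod_def sum_distrib_left ac_simps intro!: sum.cong)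

lemma ev_cubic:
  fixes A J :: "'a::field mat"
  assumes A: "A \<in> carrier_mat N N" and J: "J \<in> carrier_mat N N"
    and sq: "A * A = a \<cdot>\<^sub>m J - b \<cdot>\<^sub>m A" and AJ: "A * J = a \<cdot>\<^sub>m J"
    and ev: "eigenvalue A lam"
  shows "lam * (lam + b) * (lam - a) = 0"
proof -
  from ev obtain v where v: "v \<in> carrier_vec N" "v \<noteq> 0\<^sub>v N" "A *\<^sub>v v = lam \<cdot>\<^sub>v v"
    using A unfolding eigenvalue_def eigenvector_def by auto
  from v(1,2) obtain i where i: "i < N" "v $ i \<noteq> 0"
    by (metis eq_vecI carrier_vecD index_zero_vec(1,2))
  define w where "w = J *\<^sub>v v"
  have w: "w \<in> carrier_vec N" using J v(1) by (simp add: w_def)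
  have Av: "A *\<^sub>v v \<in> carrier_vec N" using A v by simp
  have E1: "A *\<^sub>v (A *\<^sub>v v) = (lam * lam) \<cdot>\<^sub>v v"
    using v A by (simp add: mult_mat_vec smult_smult_assoc)
  have E2: "A *\<^sub>v (A *\<^sub>v v) = a \<cdot>\<^sub>v w - (b * lam) \<cdot>\<^sub>v v"
  proof -
    have "A *\<^sub>v (A *\<^sub>v v) = (A * A) *\<^sub>v v" using A v by (simp add: assoc_mult_mat_vec)
    also have "\<dots> = (a \<cdot>\<^sub>m J) *\<^sub>v v - (b \<cdot>\<^sub>m A) *\<^sub>v v"
      unfolding sq using minus_mult_distrib_mat_vec[of "a \<cdot>\<^sub>m J" N N "b \<cdot>\<^sub>m A" v] A J v by simp
    also have "\<dots> = a \<cdot>\<^sub>v w - (b * lam) \<cdot>\<^sub>v v"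
      using A J v by (simp add: w_def smult_mat_mult_mat_vec_assoc mult_mat_vec smult_smult_assoc)
    finally show ?thesis .
  qed
  have E3: "A *\<^sub>v w = a \<cdot>\<^sub>v w"
  proof -
    have "A *\<^sub>v w = (A * J) *\<^sub>v v" using A J v by (simp add: w_def assoc_mult_mat_vec)
    also have "\<dots> = a \<cdot>\<^sub>v w" unfolding AJ using J v by (simp add: w_def smult_mat_mult_mat_vec_assoc)
    finally show ?thesis .
  qed
  have E4: "A *\<^sub>v (A *\<^sub>v (A *\<^sub>v v)) = (lam * lam * lam) \<cdot>\<^sub>v v"
    using v A E1 by (simp add: mult_mat_vec smult_smult_assoc mult.commute)
  have E5: "A *\<^sub>v (A *\<^sub>v (A *\<^sub>v v)) = (a * a) \<cdot>\<^sub>v w - (b * lam * lam) \<cdot>\<^sub>v v"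
  proof -
    have "A *\<^sub>v (A *\<^sub>v (A *\<^sub>v v)) = A *\<^sub>v (a \<cdot>\<^sub>v w - (b * lam) \<cdot>\<^sub>v v)" using E2 by simp
    also have "\<dots> = a \<cdot>\<^sub>v (A *\<^sub>v w) - (b * lam) \<cdot>\<^sub>v (A *\<^sub>v v)"
      using mult_minus_distrib_mat_vec[of A N N "a \<cdot>\<^sub>v w" "(b * lam) \<cdot>\<^sub>v v"] A v w by (simp add: mult_mat_vec)
    also have "\<dots> = (a * a) \<cdot>\<^sub>v w - (b * lam * lam) \<cdot>\<^sub>v v"
      using E3 v by (simp add: smult_smult_assoc mult.assoc)
    finally show ?thesis .
  qed
  let ?x = "v $ i" and ?y = "w $ i"
  have e1: "lam * lam * ?x = a * ?y - b * lam * ?x"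
    using arg_cong[OF trans[OF E1[symmetric] E2], of "\<lambda>u. u $ i"] i v w by simp
  have e2: "lam * lam * lam * ?x = a * a * ?y - b * lam * lam * ?x"
    using arg_cong[OF trans[OF E4[symmetric] E5], of "\<lambda>u. u $ i"] i v w by simp
  have "(lam * (lam + b) * (lam - a)) * ?x = 0"
  proof -
    have "a * a * ?y = a * (lam * lam * ?x + b * lam * ?x)" using e1
      by (metis (no_types, lifting) diff_add_cancel mult.assoc)
    then show ?thesis using e2 by (simp add: algebra_simps)
  qed
  thus ?thesis using i by simp
qed


lemma proots_lin: "proots (\<Prod>r\<leftarrow>rs. [:-r, 1:]) = mset (rs :: 'a::idom list)"
proof (induction rs)
  case (Cons r rs)
  have nz: "(\<Prod>r\<leftarrow>rs. [:-r, 1:]) \<noteq> (0 :: 'a poly)" by (auto simp: prod_list_zero_iff)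
  have e: "(\<Prod>r\<leftarrow>r # rs. [:-r, 1:]) = [:-r,1:] * (\<Prod>r\<leftarrow>rs. [:-r, 1:])" by simp
  have "proots (\<Prod>r\<leftarrow>r # rs. [:-r, 1:]) = proots [:-r,1:] + proots (\<Prod>r\<leftarrow>rs. [:-r, 1:])"
    unfolding e using nz by (intro proots_mult) auto
  then show ?case using Cons proots_linear_factor[of "-r"] by simp
qed simp

definition tr :: "'a::comm_ring_1 mat \<Rightarrow> 'a" where
  "tr M = (\<Sum>i<dim_row M. M $$ (i,i))"

lemma tr_comm: assumes "A \<in> carrier_mat n m" "B \<in> carrier_mat m n"
  shows "tr (A * B) = tr (B * A)"
proof -
  have "tr (A * B) = (\<Sum>i<n. \<Sum>j<m. A $$ (i,j) * B $$ (j,i))"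
    using assms by (auto simp: tr_def scalar_prod_def lessThan_atLeast0 intro!: sum.cong)
  also have "\<dots> = (\<Sum>j<m. \<Sum>i<n. B $$ (j,i) * A $$ (i,j))"
    by (subst sum.swap) (simp add: mult.commute)
  also have "\<dots> = tr (B * A)"
    using assms by (auto simp: tr_def scalar_prod_def lessThan_atLeast0 intro!: sum.cong)
  finally show ?thesis .
qed

lemma tr_sim: assumes "similar_mat_wit A B P Q"
  shows "tr A = tr B"
proof -
  define n where "n = dim_row A"
  note main = similar_mat_witD[OF n_def assms]
  have "tr A = tr ((P * B) * Q)" using main by simp
  also have "\<dots> = tr (Q * (P * B))" using main by (intro tr_comm[of _ n n]) auto
  also have "\<dots> = tr ((Q * P) * B)" using main by (subst assoc_mult_mat[of _ n n _ n _ n]) auto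
  also have "\<dots> = tr B" using main by simp
  finally show ?thesis .
qed

lemma tr_upper: assumes "B \<in> carrier_mat n n"
  shows "tr B = sum_list (diag_mat B)"
  using assms by (simp add: tr_def diag_mat_def sum_list_sum_nth lessThan_atLeast0)

lemma upper_sq_diag: assumes B: "B \<in> carrier_mat n n" and ut: "upper_triangular B" and i: "i < n"
  shows "(B * B) $$ (i,i) = B $$ (i,i) * B $$ (i,i)"
proof -
  have "(B * B) $$ (i,i) = (\<Sum>j\<in>{0..<n}. B $$ (i,j) * B $$ (j,i))"
    using B i by (simp add: scalar_prod_def)
  also have "\<dots> = (\<Sum>j\<in>{i}. B $$ (i,j) * B $$ (j,i))"
  proof (rule sum.mono_neutral_right)
    show "\<forall>j\<in>{0..<n} - {i}. B $$ (i, j) * B $$ (j, i) = 0"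
    proof
      fix j assume j: "j \<in> {0..<n} - {i}"
      show "B $$ (i, j) * B $$ (j, i) = 0"
      proof (cases "j < i")
        case True then show ?thesis using ut B i unfolding upper_triangular_def by auto
      next
        case False then have "i < j" using j by auto
        then show ?thesis using ut B j unfolding upper_triangular_def by auto
      qed
    qed
  qed (use i in auto)
  finally show ?thesis by simp
qed

lemma core:
  fixes A :: "real mat"
  assumes A: "A \<in> carrier_mat N N" and cp: "char_poly A = (\<Prod>r\<leftarrow>rs. [:-r,1:])"
  shows "mat_spec A = mset rs"
    and "mat_spec (c \<cdot>\<^sub>m 1\<^sub>m N - A) = mset (map (\<lambda>r. c - r) rs)"
    and "mat_spec (c \<cdot>\<^sub>m 1\<^sub>m N + A) = mset (map (\<lambda>r. c + r) rs)"
    and "tr A = sum_list rs"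
    and "tr (A * A) = sum_list (map (\<lambda>r. r * r) rs)"
proof -
  show "mat_spec A = mset rs" unfolding mat_spec_def cp proots_lin ..
  obtain B P Q where sd: "schur_decomposition A rs = (B,P,Q)" by (cases "schur_decomposition A rs") auto
  from schur_decomposition[OF A cp sd] have wit: "similar_mat_wit A B P Q"
    and ut: "upper_triangular B" and dg: "diag_mat B = rs" by auto
  from similar_mat_witD2[OF A wit] have B: "B \<in> carrier_mat N N" by auto
  have len: "length rs = N" using dg B by (auto simp: diag_mat_def)
  have Bii: "\<And>i. i < N \<Longrightarrow> B $$ (i,i) = rs ! i" using dg B by (auto simp: diag_mat_def)
  show "tr A = sum_list rs" using tr_sim[OF wit] tr_upper[OF B] dg by simp
  have wit2: "similar_mat_wit (A * A) (B * B) P Q"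
    using similar_mat_wit_pow[OF wit, of 2] A B by (simp add: numeral_2_eq_2)
  have "tr (A * A) = tr (B * B)" using tr_sim[OF wit2] .
  also have "\<dots> = (\<Sum>i<N. B $$ (i,i) * B $$ (i,i))" using B ut unfolding tr_def
    by (intro sum.cong) (use B in \<open>auto simp: upper_sq_diag[OF B ut] simp del: index_mult_mat(1)\<close>)
  also have "\<dots> = sum_list (map (\<lambda>r. r * r) rs)"
    using len Bii by (simp add: sum_list_sum_nth lessThan_atLeast0)
  finally show "tr (A * A) = sum_list (map (\<lambda>r. r * r) rs)" .
  have m1: "c \<cdot>\<^sub>m 1\<^sub>m N - A = (-1) \<cdot>\<^sub>m char_matrix A c"
    using A by (intro eq_matI) (auto simp: char_matrix_def)
  have m2: "c \<cdot>\<^sub>m 1\<^sub>m N + A = char_matrix A (-c)"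
    using A by (intro eq_matI) (auto simp: char_matrix_def)
  have w1: "similar_mat_wit (c \<cdot>\<^sub>m 1\<^sub>m N - A) ((-1) \<cdot>\<^sub>m char_matrix B c) P Q"
    unfolding m1 by (intro similar_mat_wit_smult similar_mat_wit_char_matrix wit)
  have w2: "similar_mat_wit (c \<cdot>\<^sub>m 1\<^sub>m N + A) (char_matrix B (-c)) P Q"
    unfolding m2 by (intro similar_mat_wit_char_matrix wit)
  have C1: "(-1) \<cdot>\<^sub>m char_matrix B c \<in> carrier_mat N N" using B by (simp add: char_matrix_def)
  have C2: "char_matrix B (-c) \<in> carrier_mat N N" using B by (simp add: char_matrix_def)
  have u1: "upper_triangular ((-1) \<cdot>\<^sub>m char_matrix B c)"
    using ut B unfolding upper_triangular_def by (auto simp: char_matrix_def)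
  have u2: "upper_triangular (char_matrix B (-c))"
    using ut B unfolding upper_triangular_def by (auto simp: char_matrix_def)
  have d1: "diag_mat ((-1) \<cdot>\<^sub>m char_matrix B c) = map (\<lambda>r. c - r) rs"
    using B len Bii by (auto simp: diag_mat_def char_matrix_def intro!: nth_equalityI)
  have d2: "diag_mat (char_matrix B (-c)) = map (\<lambda>r. c + r) rs"
    using B len Bii by (auto simp: diag_mat_def char_matrix_def intro!: nth_equalityI)
  have "char_poly (c \<cdot>\<^sub>m 1\<^sub>m N - A) = char_poly ((-1) \<cdot>\<^sub>m char_matrix B c)"
    using w1 by (intro char_poly_similar) (auto simp: similar_mat_def)
  also have "\<dots> = (\<Prod>r\<leftarrow>map (\<lambda>r. c - r) rs. [:-r,1:])"
    using char_poly_upper_triangular[OF C1 u1] d1 by simp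
  finally show "mat_spec (c \<cdot>\<^sub>m 1\<^sub>m N - A) = mset (map (\<lambda>r. c - r) rs)"
    unfolding mat_spec_def by (simp only: proots_lin)
  have "char_poly (c \<cdot>\<^sub>m 1\<^sub>m N + A) = char_poly (char_matrix B (-c))"
    using w2 by (intro char_poly_similar) (auto simp: similar_mat_def)
  also have "\<dots> = (\<Prod>r\<leftarrow>map (\<lambda>r. c + r) rs. [:-r,1:])"
    using char_poly_upper_triangular[OF C2 u2] d2 by simp
  finally show "mat_spec (c \<cdot>\<^sub>m 1\<^sub>m N + A) = mset (map (\<lambda>r. c + r) rs)"
    unfolding mat_spec_def by (simp only: proots_lin)
qed


lemma gm_carrier[simp]: "gm N g \<in> carrier_mat N N" by (simp add: gm_def)
lemma jm_carrier[simp]: "jm N \<in> carrier_mat N N" by (simp add: jm_def)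

lemma gm_map: "map_mat complex_of_real (gm N g) = gm N g"
  by (rule eq_matI) (auto simp: gm_def)

lemma map_poly_of_real_inj:
  assumes "map_poly complex_of_real p = map_poly complex_of_real q" shows "p = q"
proof (rule poly_eqI)
  fix i
  have "coeff (map_poly complex_of_real p) i = coeff (map_poly complex_of_real q) i" using assms by simp
  thus "coeff p i = coeff q i" by (simp add: coeff_map_poly)
qed

lemma map_poly_lin: "map_poly complex_of_real (\<Prod>r\<leftarrow>rs. [:- r,1:]) = (\<Prod>x\<leftarrow>rs. [:- complex_of_real x, 1:])"
proof -
  interpret m: map_poly_comm_ring_hom "of_real :: real \<Rightarrow> complex" ..
  show ?thesis by (simp add: m.hom_prod_list o_def)
qed

lemma gm_split:
  assumes fib: "\<And>i. i < N \<Longrightarrow> card {l. l < N \<and> g l = g i} = n"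
  shows "\<exists>rs. char_poly (gm N g :: real mat) = (\<Prod>r\<leftarrow>rs. [:-r,1:]) \<and> length rs = N \<and>
     set rs \<subseteq> {0, - real n, real (N - n)}"
proof -
  let ?A = "gm N g :: real mat"
  let ?C = "gm N g :: complex mat"
  have cpC: "char_poly ?C = map_poly complex_of_real (char_poly ?A)"
  proof -
    have "char_poly (map_mat complex_of_real ?A) = map_poly complex_of_real (char_poly ?A)"
      by (rule of_real_hom.char_poly_hom, rule gm_carrier)
    thus ?thesis unfolding gm_map .
  qed
  obtain as where as: "char_poly ?C = (\<Prod>a\<leftarrow>as. [:-a,1:])" "length as = N"
    using char_poly_factorized[OF gm_carrier[of N g]] by auto
  have inas: "a \<in> {0, - of_nat n, of_nat (N - n)}" if a: "a \<in> set as" for a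
  proof -
    have "poly (char_poly ?C) a = 0" unfolding as(1) using a
      by (auto simp: poly_prod_list prod_list_zero_iff)
    hence "eigenvalue ?C a" using eigenvalue_root_char_poly[OF gm_carrier] by blast
    from ev_cubic[OF gm_carrier jm_carrier gm_sq[OF fib] gm_j[OF fib] this]
    have "a * (a + of_nat n) * (a - of_nat (N - n)) = 0" .
    thus ?thesis by (auto simp: eq_neg_iff_add_eq_0)
  qed
  define rs where "rs = map Re as"
  have asrs: "as = map complex_of_real rs"
    unfolding rs_def map_map
  proof (rule sym, rule map_idI)
    fix a show "a \<in> set as \<Longrightarrow> (complex_of_real \<circ> Re) a = a"
    proof -
      assume "a \<in> set as"
      then have "a = 0 \<or> a = - of_nat n \<or> a = of_nat (N - n)" using inas by blast
      then show ?thesis by (elim disjE) (simp_all add: complex_eq_iff)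
    qed
  qed
  have "map_poly complex_of_real (char_poly ?A) = map_poly complex_of_real (\<Prod>r\<leftarrow>rs. [:-r,1:])"
    unfolding cpC[symmetric] as(1) asrs map_poly_lin by (simp add: o_def)
  hence "char_poly ?A = (\<Prod>r\<leftarrow>rs. [:-r,1:])" by (rule map_poly_of_real_inj)
  moreover have "length rs = N" using as(2) by (simp add: rs_def)
  moreover have "set rs \<subseteq> {0, - real n, real (N - n)}"
  proof
    fix r assume "r \<in> set rs"
    then obtain a where a: "a \<in> set as" "r = Re a" by (auto simp: rs_def)
    then have "a = 0 \<or> a = - of_nat n \<or> a = of_nat (N - n)" using inas by blast
    then show "r \<in> {0, - real n, real (N - n)}" using a(2) by auto
  qed
  ultimately show ?thesis by blast
qed


lemma mset3:
  fixes rs :: "'a list"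
  assumes "set rs \<subseteq> {a, b, c}" "a \<noteq> b" "a \<noteq> c" "b \<noteq> c"
  shows "mset rs = replicate_mset (count (mset rs) a) a + replicate_mset (count (mset rs) b) b
      + replicate_mset (count (mset rs) c) c"
proof (rule multiset_eqI)
  fix x
  show "count (mset rs) x = count (replicate_mset (count (mset rs) a) a + replicate_mset (count (mset rs) b) b
      + replicate_mset (count (mset rs) c) c) x"
  proof (cases "x \<in> {a,b,c}")
    case True then show ?thesis using assms by auto
  next
    case False
    then have "x \<notin> set rs" using assms by auto
    then have "count (mset rs) x = 0" by (simp add: count_mset_0_iff)
    then show ?thesis using False by auto
  qed
qed

lemma solve_counts:
  fixes rs :: "real list" and k n :: nat
  assumes set: "set rs \<subseteq> {0, - real n, real (N - n)}" and len: "length rs = N"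
    and N: "N = k * n" and k: "k \<ge> 2" and n: "n \<ge> 1"
    and s1: "sum_list rs = 0" and s2: "sum_list (map (\<lambda>r. r * r) rs) = real N * real (N - n)"
  shows "mset rs = replicate_mset (k * (n - 1)) 0 + replicate_mset (k - 1) (- real n)
      + {# real ((k - 1) * n) #}"
proof -
  define d where "d = N - n"
  have dk: "d = (k - 1) * n" using N k by (simp add: d_def diff_mult_distrib)
  have dpos: "real d > 0" using dk k n by simp
  have ne: "(0::real) \<noteq> - real n" "(0::real) \<noteq> real d" "- real n \<noteq> real d" using n dpos by auto
  define c0 where "c0 = count (mset rs) 0"
  define c1 where "c1 = count (mset rs) (- real n)"
  define c2 where "c2 = count (mset rs) (real d)"
  have M: "mset rs = replicate_mset c0 0 + replicate_mset c1 (- real n) + replicate_mset c2 (real d)"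
    unfolding c0_def c1_def c2_def using mset3[OF set[folded d_def] ne] .
  have "real N = real (size (mset rs))" using len by simp
  also have "\<dots> = real c0 + real c1 + real c2" unfolding M by simp
  finally have e0: "real N = real c0 + real c1 + real c2" .
  have "sum_list rs = sum_mset (mset rs)" by (simp add: sum_mset_sum_list)
  also have "\<dots> = real c1 * (- real n) + real c2 * real d" unfolding M by simp
  finally have e1: "real c1 * (- real n) + real c2 * real d = 0" using s1 by simp
  have "sum_list (map (\<lambda>r. r * r) rs) = sum_mset (image_mset (\<lambda>r. r * r) (mset rs))"
    by (metis mset_map sum_mset_sum_list)
  also have "\<dots> = real c1 * (real n * real n) + real c2 * (real d * real d)" unfolding M by simp
  finally have e2: "real c1 * (real n * real n) + real c2 * (real d * real d) = real N * real d"
    using s2 by (simp add: d_def)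
  have rd: "real d = (real k - 1) * real n" using dk k by (simp add: of_nat_diff)
  have rN: "real N = real k * real n" using N by simp
  have nz: "real n \<noteq> 0" using n by simp
  have c1e: "real c1 = (real k - 1) * real c2"
  proof -
    have "real n * (real c1 - (real k - 1) * real c2) = 0" using e1 unfolding rd by (simp add: algebra_simps)
    thus ?thesis using nz by simp
  qed
  have "(real k - 1) * real k * (real n * real n) * real c2 = (real k - 1) * real k * (real n * real n)"
    using e2 unfolding c1e rd rN by (simp add: algebra_simps)
  moreover have "(real k - 1) * real k * (real n * real n) \<noteq> 0" using k nz by simp
  ultimately have "real c2 = 1" by simp
  hence c2: "c2 = 1" by simp
  hence c1: "c1 = k - 1" using c1e k by (simp add: of_nat_diff)
  have "real (c0 + k) = real (k * n)" using e0 c1 c2 rN k by (simp add: of_nat_diff)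
  hence "c0 + k = k * n" by (simp only: of_nat_eq_iff)
  hence "c0 = k * n - k" by simp
  hence c0: "c0 = k * (n - 1)" by (simp add: diff_mult_distrib2)
  show ?thesis unfolding M c0 c1 c2 dk by simp
qed


lemma edges_count:
  assumes finV: "finite V" and sym: "\<And>u v. u \<in> V \<Longrightarrow> v \<in> V \<Longrightarrow> E u v \<Longrightarrow> E v u \<and> u \<noteq> v"
    and deg: "\<And>u. u \<in> V \<Longrightarrow> card {w\<in>V. E u w} = D"
  shows "2 * card (graph_edges V E) = card V * D"
proof -
  define P where "P = Sigma V (\<lambda>u. {w\<in>V. E u w})"
  define h where "h = (\<lambda>(u::'a, v). {u, v})"
  have finP: "finite P" unfolding P_def using finV by auto
  have cP: "card P = card V * D"
    unfolding P_def using finV deg by (simp add: card_SigmaI)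
  have GE: "graph_edges V E = h ` P"
    unfolding graph_edges_def P_def h_def by auto
  have "card P = (\<Sum>x\<in>P. 1)" by simp
  also have "\<dots> = (\<Sum>y\<in>h ` P. \<Sum>x\<in>{x\<in>P. h x = y}. 1)"
    by (rule sum.image_gen[OF finP])
  also have "\<dots> = (\<Sum>y\<in>h ` P. 2)"
  proof (rule sum.cong[OF refl])
    fix y assume "y \<in> h ` P"
    then obtain u v where uv: "(u,v) \<in> P" "y = {u,v}" by (auto simp: h_def)
    hence uvV: "u \<in> V" "v \<in> V" "E u v" by (auto simp: P_def)
    with sym have vu: "E v u" "u \<noteq> v" by auto
    have "{x\<in>P. h x = y} = {(u,v),(v,u)}"
      using uv uvV vu unfolding P_def h_def by (auto simp: doubleton_eq_iff)
    then show "(\<Sum>x\<in>{x\<in>P. h x = y}. 1) = (2::nat)" using vu by simp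
  qed
  also have "\<dots> = 2 * card (h ` P)" by simp
  finally show ?thesis using cP GE by simp
qed

lemma card_fib_sum:
  assumes "finite V" "\<And>u. u \<in> V \<Longrightarrow> card {w\<in>V. f w = f u} = n"
  shows "card V = card (f ` V) * n"
proof -
  have "card V = (\<Sum>x\<in>V. 1)" by simp
  also have "\<dots> = (\<Sum>y\<in>f ` V. \<Sum>x\<in>{x\<in>V. f x = y}. 1)"
    by (rule sum.image_gen[OF assms(1)])
  also have "\<dots> = (\<Sum>y\<in>f ` V. n)"
    by (rule sum.cong[OF refl]) (use assms(2) in auto)
  finally show ?thesis by simp
qed


lemma vertex_enum_bij: "finite V \<Longrightarrow> bij_betw (vertex_enum V) {..<card V} V"
proof -
  assume "finite V"
  then obtain h where "bij_betw h {0..<card V} V" using ex_bij_betw_nat_finite by blast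
  then have "bij_betw h {..<card V} V" by (simp add: lessThan_atLeast0)
  then show ?thesis unfolding vertex_enum_def by (rule someI[of _ h])
qed

lemma graph_main:
  fixes V :: "'v set" and E :: "'v \<Rightarrow> 'v \<Rightarrow> bool" and f :: "'v \<Rightarrow> 'q" and k n :: nat
  assumes finV: "finite V" and adj: "\<And>u v. u \<in> V \<Longrightarrow> v \<in> V \<Longrightarrow> E u v \<longleftrightarrow> f u \<noteq> f v"
    and fib: "\<And>u. u \<in> V \<Longrightarrow> card {w\<in>V. f w = f u} = n" and kk: "card (f ` V) = k"
    and k2: "k \<ge> 2" and n1: "n \<ge> 1"
  shows "mat_spec (adj_mat V E) = replicate_mset (k * (n - 1)) 0 + replicate_mset (k - 1) (- real n)
      + {# real ((k - 1) * n) #}"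
    and "mat_spec (lap_mat V E) = image_mset (\<lambda>r. real ((k - 1) * n) - r)
       (replicate_mset (k * (n - 1)) 0 + replicate_mset (k - 1) (- real n) + {# real ((k - 1) * n) #})"
    and "mat_spec (slap_mat V E) = image_mset (\<lambda>r. real ((k - 1) * n) + r)
       (replicate_mset (k * (n - 1)) 0 + replicate_mset (k - 1) (- real n) + {# real ((k - 1) * n) #})"
    and "avg_deg V E = real ((k - 1) * n)"
    and "graph_energy V E = 2 * real ((k - 1) * n)"
    and "lap_energy V E = 2 * real ((k - 1) * n)"
    and "slap_energy V E = 2 * real ((k - 1) * n)"
proof -
  define N where "N = card V"
  have NK: "N = k * n" unfolding N_def using card_fib_sum[OF finV fib] kk by simp
  define d where "d = N - n"
  have dk: "d = (k - 1) * n" using NK by (simp add: d_def diff_mult_distrib)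
  define e where "e = vertex_enum V"
  have bij: "bij_betw e {..<N} V" unfolding e_def N_def by (rule vertex_enum_bij[OF finV])
  have eV: "\<And>i. i < N \<Longrightarrow> e i \<in> V" using bij by (auto simp: bij_betw_def)
  define g where "g = f \<circ> e"
  have fibg: "card {l. l < N \<and> g l = g i} = n" if i: "i < N" for i
  proof -
    have "e ` {l. l < N \<and> g l = g i} = {w\<in>V. f w = f (e i)}"
    proof
      show "e ` {l. l < N \<and> g l = g i} \<subseteq> {w \<in> V. f w = f (e i)}" using eV by (auto simp: g_def)
      show "{w \<in> V. f w = f (e i)} \<subseteq> e ` {l. l < N \<and> g l = g i}"
      proof
        fix w assume w: "w \<in> {w \<in> V. f w = f (e i)}"
        then obtain l where "l < N" "w = e l" using bij by (auto simp: bij_betw_def)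
        then show "w \<in> e ` {l. l < N \<and> g l = g i}" using w by (auto simp: g_def)
      qed
    qed
    moreover have "inj_on e {l. l < N \<and> g l = g i}"
      using bij by (auto simp: bij_betw_def intro: inj_on_subset)
    ultimately have "card {l. l < N \<and> g l = g i} = card {w\<in>V. f w = f (e i)}"
      by (metis card_image)
    also have "\<dots> = n" using fib eV i by simp
    finally show ?thesis .
  qed
  let ?A = "gm N g :: real mat"
  have A: "adj_mat V E = ?A"
    unfolding adj_mat_def gm_def N_def[symmetric] e_def[symmetric]
    by (rule eq_matI) (auto simp: adj eV g_def)
  have degv: "graph_degree V E (e i) = d" if i: "i < N" for i
  proof -
    have "{w\<in>V. E (e i) w} = V - {w\<in>V. f w = f (e i)}" using adj eV i by auto
    hence "card {w\<in>V. E (e i) w} = N - n" using fib eV i finV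
      by (simp add: card_Diff_subset N_def)
    thus ?thesis by (simp add: graph_degree_def d_def)
  qed
  have D: "deg_mat V E = real d \<cdot>\<^sub>m 1\<^sub>m N"
    unfolding deg_mat_def N_def[symmetric] e_def[symmetric]
    by (rule eq_matI) (auto simp: degv)
  obtain rs where rs: "char_poly ?A = (\<Prod>r\<leftarrow>rs. [:-r,1:])" "length rs = N"
    "set rs \<subseteq> {0, - real n, real (N - n)}"
    using gm_split[OF fibg] by blast
  note C = core[OF gm_carrier rs(1)]
  have t1: "tr ?A = 0" by (simp add: tr_def gm_def)
  have t2: "tr (?A * ?A) = real N * real (N - n)"
  proof -
    have "tr (?A * ?A) = (\<Sum>i<N. (?A * ?A) $$ (i,i))" by (simp add: tr_def gm_def)
    also have "\<dots> = (\<Sum>i<N. real (N - n))"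
    proof (rule sum.cong[OF refl])
      fix i assume i: "i \<in> {..<N}"
      show "(?A * ?A) $$ (i,i) = real (N - n)"
      proof -
        have sq: "?A * ?A = of_nat (N - n) \<cdot>\<^sub>m jm N - of_nat n \<cdot>\<^sub>m ?A"
          by (rule gm_sq) (rule fibg)
        show ?thesis unfolding sq using i by (simp add: gm_def jm_def)
      qed
    qed
    finally show ?thesis by simp
  qed
  have M: "mset rs = replicate_mset (k * (n - 1)) 0 + replicate_mset (k - 1) (- real n)
      + {# real ((k - 1) * n) #}"
    by (rule solve_counts[OF rs(3) rs(2) NK k2 n1]) (use C(4) C(5) t1 t2 in simp_all)
  show "mat_spec (adj_mat V E) = replicate_mset (k * (n - 1)) 0 + replicate_mset (k - 1) (- real n)
      + {# real ((k - 1) * n) #}" unfolding A C(1) M ..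
  show "mat_spec (lap_mat V E) = image_mset (\<lambda>r. real ((k - 1) * n) - r)
       (replicate_mset (k * (n - 1)) 0 + replicate_mset (k - 1) (- real n) + {# real ((k - 1) * n) #})"
    unfolding lap_mat_def A D C(2) mset_map M dk ..
  show "mat_spec (slap_mat V E) = image_mset (\<lambda>r. real ((k - 1) * n) + r)
       (replicate_mset (k * (n - 1)) 0 + replicate_mset (k - 1) (- real n) + {# real ((k - 1) * n) #})"
    unfolding slap_mat_def A D C(3) mset_map M dk ..
  have "2 * card (graph_edges V E) = card V * d"
  proof (rule edges_count[OF finV])
    show "\<And>u v. u \<in> V \<Longrightarrow> v \<in> V \<Longrightarrow> E u v \<Longrightarrow> E v u \<and> u \<noteq> v" using adj by auto
    fix u assume u: "u \<in> V"
    have "{w\<in>V. E u w} = V - {w\<in>V. f w = f u}" using adj u by auto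
    thus "card {w\<in>V. E u w} = d" using fib u finV by (simp add: card_Diff_subset N_def d_def)
  qed
  moreover have "N > 0" using NK k2 n1 by simp
  ultimately show avg: "avg_deg V E = real ((k - 1) * n)"
    unfolding avg_deg_def dk[symmetric] N_def[symmetric]
    by (simp add: field_simps) (metis of_nat_mult of_nat_numeral)
  have en: "sum_mset (image_mset abs (replicate_mset (k * (n - 1)) 0 + replicate_mset (k - 1) (- real n)
      + {# real ((k - 1) * n) #})) = 2 * real ((k - 1) * n)"
    by (simp add: of_nat_diff)
  show "graph_energy V E = 2 * real ((k - 1) * n)"
    unfolding graph_energy_def A C(1) M by (rule en)
  show "lap_energy V E = 2 * real ((k - 1) * n)"
    unfolding lap_energy_def lap_mat_def A D C(2) mset_map M dk avg multiset.map_comp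
    by (simp add: o_def en[unfolded image_mset_union] of_nat_diff)
  show "slap_energy V E = 2 * real ((k - 1) * n)"
    unfolding slap_energy_def slap_mat_def A D C(3) mset_map M dk avg multiset.map_comp
    by (simp add: o_def of_nat_diff)
qed



definition cent :: "('a, 'b) monoid_scheme \<Rightarrow> 'a \<Rightarrow> 'a set" where
  "cent G x = {g \<in> carrier G. g \<otimes>\<^bsub>G\<^esub> x = x \<otimes>\<^bsub>G\<^esub> g}"

context group
begin

abbreviation "conjact \<equiv> (\<lambda>g. (\<lambda>h \<in> carrier G. g \<otimes> h \<otimes> (inv g)))"

lemma cent_stab: assumes x: "x \<in> carrier G" shows "cent G x = stabilizer G conjact x"
proof -
  have "g \<otimes> x \<otimes> inv g = x \<longleftrightarrow> g \<otimes> x = x \<otimes> g" if g: "g \<in> carrier G" for g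
  proof
    assume "g \<otimes> x \<otimes> inv g = x"
    hence "g \<otimes> x \<otimes> inv g \<otimes> g = x \<otimes> g" by simp
    thus "g \<otimes> x = x \<otimes> g" using g x by (simp add: m_assoc)
  next
    assume "g \<otimes> x = x \<otimes> g"
    thus "g \<otimes> x \<otimes> inv g = x" using g x by (simp add: m_assoc r_inv)
  qed
  thus ?thesis unfolding cent_def stabilizer_def using x by auto
qed

lemma cent_subgroup: "x \<in> carrier G \<Longrightarrow> subgroup (cent G x) G"
  using cent_stab group_action.stabilizer_subgroup[OF action_by_conjugation] by simp

lemma orbit_conj: "x \<in> carrier G \<Longrightarrow> orbit G conjact x = conj_class G x"
  unfolding orbit_def conj_class_def by auto

lemma class_card: "finite (carrier G) \<Longrightarrow> x \<in> carrier G \<Longrightarrow> card (conj_class G x) * card (cent G x) = order G"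
  using group_action.orbit_stabilizer_theorem[OF action_by_conjugation] cent_stab orbit_conj by simp

lemma subgroup_card_dvd: "subgroup H G \<Longrightarrow> card H dvd order G"
  using lagrange by (metis dvd_triv_right)

lemma conj_in_class: "x \<in> carrier G \<Longrightarrow> x \<in> conj_class G x"
  unfolding conj_class_def by (rule CollectI, rule exI[of _ \<one>]) auto

lemma conj_class_carrier: "x \<in> carrier G \<Longrightarrow> conj_class G x \<subseteq> carrier G"
  unfolding conj_class_def by auto

lemma conj_class_eq: assumes x: "x \<in> carrier G" and y: "y \<in> conj_class G x"
  shows "conj_class G y = conj_class G x"
proof -
  interpret ga: group_action G "carrier G" conjact by (rule action_by_conjugation)
  have yo: "y \<in> orbit G conjact x" using y orbit_conj x by simp
  have yc: "y \<in> carrier G" using y conj_class_carrier x by auto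
  have xo: "x \<in> orbit G conjact y" using ga.orbit_sym[OF x yc yo] .
  have "orbit G conjact y = orbit G conjact x"
  proof
    show "orbit G conjact y \<subseteq> orbit G conjact x"
    proof
      fix z assume z: "z \<in> orbit G conjact y"
      hence zc: "z \<in> carrier G" using orbit_conj[OF yc] conj_class_carrier[OF yc] by auto
      show "z \<in> orbit G conjact x" by (rule ga.orbit_trans[OF x yc zc yo z])
    qed
    show "orbit G conjact x \<subseteq> orbit G conjact y"
    proof
      fix z assume z: "z \<in> orbit G conjact x"
      hence zc: "z \<in> carrier G" using orbit_conj[OF x] conj_class_carrier[OF x] by auto
      show "z \<in> orbit G conjact y" by (rule ga.orbit_trans[OF yc x zc xo z])
    qed
  qed
  moreover note yc
  ultimately show ?thesis using orbit_conj x by simp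
qed

lemma ginv3: "g \<in> carrier G \<Longrightarrow> x \<in> carrier G \<Longrightarrow> g \<otimes> (inv g \<otimes> x) = x"
  by (simp add: m_assoc[symmetric])
lemma ginv4: "g \<in> carrier G \<Longrightarrow> x \<in> carrier G \<Longrightarrow> inv g \<otimes> (g \<otimes> x) = x"
  by (simp add: m_assoc[symmetric])

lemma prod_bound: assumes A: "subgroup A G" and B: "subgroup B G" and fin: "finite (carrier G)"
  shows "card A * card B \<le> card (A <#> B) * card (A \<inter> B)"
proof -
  define S where "S = A \<times> B"
  define mu where "mu = (\<lambda>(a, b). a \<otimes> b)"
  have Ac: "A \<subseteq> carrier G" and Bc: "B \<subseteq> carrier G" using A B subgroup.subset by auto
  have finA: "finite A" and finB: "finite B" using Ac Bc fin finite_subset by auto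
  have finS: "finite S" unfolding S_def using finA finB by simp
  have img: "mu ` S = A <#> B" unfolding mu_def S_def set_mult_def by auto
  have fib: "card {z\<in>S. mu z = s} \<le> card (A \<inter> B)" if s: "s \<in> mu ` S" for s
  proof -
    obtain a b where ab: "a \<in> A" "b \<in> B" "s = a \<otimes> b" using s unfolding mu_def S_def by auto
    have a: "a \<in> carrier G" and b: "b \<in> carrier G" using ab Ac Bc by auto
    define phi where "phi = (\<lambda>(a'::'a, b'::'a). inv a' \<otimes> a)"
    have into: "phi ` {z\<in>S. mu z = s} \<subseteq> A \<inter> B"
    proof
      fix w assume "w \<in> phi ` {z\<in>S. mu z = s}"
      then obtain a' b' where z: "a' \<in> A" "b' \<in> B" "a' \<otimes> b' = a \<otimes> b" "w = inv a' \<otimes> a"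
        unfolding phi_def S_def mu_def using ab by auto
      have a': "a' \<in> carrier G" and b': "b' \<in> carrier G" using z Ac Bc by auto
      have "w \<in> A" using z(1,4) ab(1) A by (simp add: subgroup.m_closed subgroup.m_inv_closed)
      moreover have "w = b' \<otimes> inv b"
      proof -
        have "b' = inv a' \<otimes> (a \<otimes> b)" using z(3) a' b' a b by (simp add: inv_solve_left)
        hence "b' = w \<otimes> b" using z(4) a' a b by (simp add: m_assoc)
        thus ?thesis using a' a b b' z(4) by (simp add: inv_solve_right)
      qed
      hence "w \<in> B" using z(2) ab(2) B by (simp add: subgroup.m_closed subgroup.m_inv_closed)
      ultimately show "w \<in> A \<inter> B" by simp
    qed
    have inj: "inj_on phi {z\<in>S. mu z = s}"
    proof (rule inj_onI)
      fix z1 z2 assume z1: "z1 \<in> {z\<in>S. mu z = s}" and z2: "z2 \<in> {z\<in>S. mu z = s}" and e: "phi z1 = phi z2"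
      obtain a1 b1 where 1: "z1 = (a1, b1)" "a1 \<in> A" "b1 \<in> B" "a1 \<otimes> b1 = s" using z1 unfolding S_def mu_def by auto
      obtain a2 b2 where 2: "z2 = (a2, b2)" "a2 \<in> A" "b2 \<in> B" "a2 \<otimes> b2 = s" using z2 unfolding S_def mu_def by auto
      have c: "a1 \<in> carrier G" "a2 \<in> carrier G" "b1 \<in> carrier G" "b2 \<in> carrier G" using 1 2 Ac Bc by auto
      have "inv a1 \<otimes> a = inv a2 \<otimes> a" using e 1 2 by (simp add: phi_def)
      hence "inv a1 = inv a2" using c a by (simp add: right_cancel)
      hence aa: "a1 = a2" using c by (metis inv_inv)
      hence "a1 \<otimes> b1 = a1 \<otimes> b2" using 1 2 by simp
      hence "b1 = b2" using c by simp
      thus "z1 = z2" using aa 1 2 by simp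
    qed
    have "card {z\<in>S. mu z = s} = card (phi ` {z\<in>S. mu z = s})" using card_image[OF inj] by simp
    also have "\<dots> \<le> card (A \<inter> B)" using card_mono[OF _ into] finA by simp
    finally show ?thesis .
  qed
  have "card A * card B = card S" unfolding S_def by (simp add: card_cartesian_product)
  also have "\<dots> = (\<Sum>x\<in>S. 1)" by simp
  also have "\<dots> = (\<Sum>s\<in>mu ` S. \<Sum>x\<in>{x\<in>S. mu x = s}. 1)" by (rule sum.image_gen[OF finS])
  also have "\<dots> = (\<Sum>s\<in>mu ` S. card {x\<in>S. mu x = s})" by simp
  also have "\<dots> \<le> (\<Sum>s\<in>mu ` S. card (A \<inter> B))" by (rule sum_mono) (rule fib)
  also have "\<dots> = card (A <#> B) * card (A \<inter> B)" using img by simp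
  finally show ?thesis .
qed

end

locale pg = group G for G (structure) + fixes p m :: nat
  assumes fin: "finite (carrier G)" and pr: "prime p" and ord: "card (carrier G) = p ^ m"
    and zc: "card (grp_center G) = p ^ (m - 2)"
begin

lemma p1: "p > 1" using pr prime_gt_1_nat by blast

lemma Z_sub: "grp_center G \<subseteq> carrier G" unfolding grp_center_def by auto

lemma Z_cent: "x \<in> carrier G \<Longrightarrow> grp_center G \<subseteq> cent G x"
  unfolding grp_center_def cent_def by auto

lemma self_cent: "x \<in> carrier G \<Longrightarrow> x \<in> cent G x"
  unfolding cent_def by auto

lemma cent_carrier: "cent G x \<subseteq> carrier G" unfolding cent_def by auto

lemma sub_pow: assumes "subgroup H G" shows "\<exists>j\<le>m. card H = p ^ j"
proof -
  have "card H dvd p ^ m" using subgroup_card_dvd[OF assms] ord by (simp add: order_def)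
  thus ?thesis using divides_primepow_nat[OF pr] by blast
qed

lemma pow_less: "p ^ a < p ^ b \<longleftrightarrow> a < b"
  using p1 by (simp add: power_strict_increasing_iff)

lemma cent_card: assumes x: "x \<in> carrier G" "x \<notin> grp_center G"
  shows "card (cent G x) = p ^ (m - 1)" and "m \<ge> 2"
proof -
  obtain j where j: "j \<le> m" "card (cent G x) = p ^ j" using sub_pow cent_subgroup x(1) by blast
  have finc: "finite (cent G x)" using fin cent_carrier finite_subset by blast
  have "grp_center G \<subset> cent G x" using Z_cent[OF x(1)] self_cent[OF x(1)] x(2) by blast
  hence "card (grp_center G) < card (cent G x)" using psubset_card_mono[OF finc] by blast
  hence lo: "m - 2 < j" using zc j pow_less by simp
  obtain g where g: "g \<in> carrier G" "x \<otimes> g \<noteq> g \<otimes> x" using x unfolding grp_center_def by auto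
  hence "g \<notin> cent G x" unfolding cent_def by auto
  hence "cent G x \<subset> carrier G" using cent_carrier g by blast
  hence "card (cent G x) < card (carrier G)" using psubset_card_mono[OF fin] by blast
  hence hi: "j < m" using ord j pow_less by simp
  show "m \<ge> 2" using lo hi by linarith
  hence "j = m - 1" using lo hi by linarith
  thus "card (cent G x) = p ^ (m - 1)" using j by simp
qed

lemma cent_gen: assumes x: "x \<in> carrier G" "x \<notin> grp_center G"
  shows "cent G x = generate G (insert x (grp_center G))"
proof -
  let ?H = "generate G (insert x (grp_center G))"
  have ins: "insert x (grp_center G) \<subseteq> carrier G" using x Z_sub by auto
  have sH: "subgroup ?H G" by (rule generate_is_subgroup[OF ins])
  have Hc: "?H \<subseteq> cent G x"
    by (rule generate_subgroup_incl[OF _ cent_subgroup[OF x(1)]]) (use Z_cent[OF x(1)] self_cent[OF x(1)] in auto)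
  have ZH: "grp_center G \<subset> ?H" using generate.incl[of _ "insert x (grp_center G)" G] x(2) by blast
  obtain j where j: "j \<le> m" "card ?H = p ^ j" using sub_pow[OF sH] by blast
  have finH: "finite ?H" using fin sH subgroup.subset finite_subset by blast
  have finc: "finite (cent G x)" using fin cent_carrier finite_subset by blast
  have "card (grp_center G) < card ?H" using psubset_card_mono[OF finH ZH] .
  hence lo: "m - 2 < j" using zc j pow_less by simp
  have "card ?H \<le> card (cent G x)" using card_mono[OF finc Hc] .
  hence hi: "j \<le> m - 1" using j cent_card[OF x] p1 by (simp add: power_increasing_iff)
  have "m \<ge> 2" using cent_card[OF x] by simp
  hence "j = m - 1" using lo hi by linarith
  hence "card ?H = card (cent G x)" using j cent_card[OF x] by simp
  thus ?thesis using card_subset_eq[OF finc Hc] by simp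
qed

lemma cent_eq: assumes x: "x \<in> carrier G" "x \<notin> grp_center G" and y: "y \<in> carrier G" "y \<notin> grp_center G"
  and xy: "x \<otimes> y = y \<otimes> x"
  shows "cent G x = cent G y"
proof -
  have "generate G (insert x (grp_center G)) \<subseteq> cent G y"
    by (rule generate_subgroup_incl[OF _ cent_subgroup[OF y(1)]])
       (use Z_cent[OF y(1)] xy x in \<open>auto simp: cent_def\<close>)
  hence sub: "cent G x \<subseteq> cent G y" using cent_gen[OF x] by simp
  have finc: "finite (cent G y)" using fin cent_carrier finite_subset by blast
  show ?thesis using card_subset_eq[OF finc sub] cent_card[OF x] cent_card[OF y] by simp
qed

lemma conj_cent: assumes x: "x \<in> carrier G" "x \<notin> grp_center G" and g: "g \<in> carrier G"
  shows "g \<otimes> x \<otimes> inv g \<in> cent G x"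
proof (rule ccontr)
  define y where "y = g \<otimes> x \<otimes> inv g"
  define A where "A = cent G x"
  define B where "B = cent G y"
  assume yA: "g \<otimes> x \<otimes> inv g \<notin> cent G x"
  hence yA: "y \<notin> A" unfolding y_def A_def .
  have yc: "y \<in> carrier G" using x g by (simp add: y_def)
  have yZ: "y \<notin> grp_center G"
  proof
    assume "y \<in> grp_center G"
    hence "g \<otimes> y = y \<otimes> g" using g unfolding grp_center_def by auto
    moreover have "y \<otimes> g = g \<otimes> x" using x g by (simp add: y_def m_assoc)
    ultimately have "y = x" using x g yc by simp
    thus False using yA self_cent[OF x(1)] A_def by simp
  qed
  have gA: "g \<notin> A"
  proof
    assume "g \<in> A"
    hence "g \<otimes> x = x \<otimes> g" unfolding A_def cent_def by auto
    hence "y = x" using x g by (simp add: y_def m_assoc)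
    thus False using yA self_cent[OF x(1)] A_def by simp
  qed
  have AB: "A \<inter> B \<subseteq> grp_center G"
  proof
    fix w assume w: "w \<in> A \<inter> B"
    show "w \<in> grp_center G"
    proof (rule ccontr)
      assume wZ: "w \<notin> grp_center G"
      have wc: "w \<in> carrier G" using w cent_carrier A_def by auto
      have "w \<otimes> x = x \<otimes> w" using w unfolding A_def cent_def by auto
      hence "cent G w = cent G x" using cent_eq[OF wc wZ x] by simp
      moreover have "w \<otimes> y = y \<otimes> w" using w unfolding B_def cent_def by auto
      hence "cent G w = cent G y" using cent_eq[OF wc wZ yc yZ] by simp
      ultimately have "A = B" unfolding A_def B_def by simp
      thus False using yA self_cent[OF yc] B_def by simp
    qed
  qed
  have finZ: "finite (grp_center G)" using fin Z_sub finite_subset by blast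
  have cAB: "card (A \<inter> B) \<le> p ^ (m - 2)" using card_mono[OF finZ AB] zc by simp
  have m2: "m \<ge> 2" using cent_card[OF x] by simp
  have "p ^ (m - 1) * p ^ (m - 1) \<le> card (A <#> B) * card (A \<inter> B)"
    using prod_bound[OF cent_subgroup[OF x(1)] cent_subgroup[OF yc] fin] cent_card[OF x] cent_card[OF yc yZ]
    unfolding A_def B_def by simp
  also have "\<dots> \<le> card (A <#> B) * p ^ (m - 2)" using cAB by simp
  finally have le1: "p ^ (m - 1) * p ^ (m - 1) \<le> card (A <#> B) * p ^ (m - 2)" .
  have e: "m - 1 + (m - 1) = m + (m - 2)" using m2 by simp
  have "p ^ (m - 1) * p ^ (m - 1) = p ^ m * p ^ (m - 2)" by (simp only: power_add[symmetric] e)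
  hence "p ^ m * p ^ (m - 2) \<le> card (A <#> B) * p ^ (m - 2)" using le1 by simp
  hence ge: "p ^ m \<le> card (A <#> B)" using p1 by simp
  have sub: "A <#> B \<subseteq> carrier G" unfolding set_mult_def A_def B_def using cent_carrier by auto
  have "A <#> B = carrier G" using card_subset_eq[OF fin sub] ge ord card_mono[OF fin sub] by simp
  hence "inv g \<in> A <#> B" using g by simp
  then obtain a b where ab: "a \<in> A" "b \<in> B" "inv g = a \<otimes> b" unfolding set_mult_def by auto
  have a: "a \<in> carrier G" and b: "b \<in> carrier G" using ab cent_carrier A_def B_def by auto
  define u where "u = inv g \<otimes> b \<otimes> g"
  have uc: "u \<in> carrier G" using g b by (simp add: u_def)
  have bu: "b = g \<otimes> u \<otimes> inv g" using g b by (simp add: u_def m_assoc ginv3)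
  have "b \<otimes> y = y \<otimes> b" using ab(2) unfolding B_def cent_def by auto
  hence "g \<otimes> (u \<otimes> x) \<otimes> inv g = g \<otimes> (x \<otimes> u) \<otimes> inv g"
    unfolding bu y_def using g uc x by (simp add: m_assoc ginv4)
  hence "u \<otimes> x = x \<otimes> u" using g uc x by simp
  hence uA: "u \<in> A" using uc unfolding A_def cent_def by simp
  have "u = inv g \<otimes> inv a"
  proof -
    have "b = inv a \<otimes> inv g" using ab(3) a b g by (simp add: inv_solve_left m_assoc)
    thus ?thesis using g a by (simp add: u_def m_assoc)
  qed
  hence "inv g = u \<otimes> a" using g a by (simp add: m_assoc)
  hence "inv g \<in> A" using uA ab(1) cent_subgroup[OF x(1)] unfolding A_def by (simp add: subgroup.m_closed)
  hence "inv (inv g) \<in> A" using cent_subgroup[OF x(1)] unfolding A_def by (simp add: subgroup.m_inv_closed)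
  thus False using gA g by simp
qed

lemma class_props: assumes x: "x \<in> carrier G" "x \<notin> grp_center G" and y: "y \<in> conj_class G x"
  shows "y \<in> carrier G" "y \<notin> grp_center G" "cent G y = cent G x"
proof -
  obtain g where g: "g \<in> carrier G" "y = g \<otimes> x \<otimes> inv g" using y unfolding conj_class_def by auto
  show yc: "y \<in> carrier G" using g x by simp
  have yx: "y \<in> cent G x" using conj_cent[OF x g(1)] g(2) by simp
  show yZ: "y \<notin> grp_center G"
  proof
    assume "y \<in> grp_center G"
    hence "g \<otimes> y = y \<otimes> g" using g unfolding grp_center_def by auto
    moreover have "y \<otimes> g = g \<otimes> x" using x g by (simp add: m_assoc)
    ultimately have "y = x" using x g yc by simp
    thus False using x \<open>y \<in> grp_center G\<close> by simp
  qed
  have "y \<otimes> x = x \<otimes> y" using yx unfolding cent_def by auto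
  thus "cent G y = cent G x" using cent_eq[OF yc yZ x] by simp
qed

lemma class_size: assumes x: "x \<in> carrier G" "x \<notin> grp_center G"
  shows "card (conj_class G x) = p"
proof -
  have m2: "m \<ge> 2" using cent_card[OF x] by simp
  have "card (conj_class G x) * p ^ (m - 1) = p ^ m"
    using class_card[OF fin x(1)] cent_card[OF x] ord by (simp add: order_def)
  also have "p ^ m = p * p ^ (m - 1)"
  proof -
    have "m = Suc (m - 1)" using m2 by simp
    hence "p ^ m = p ^ Suc (m - 1)" by (rule arg_cong)
    thus ?thesis by simp
  qed
  finally show ?thesis using p1 by simp
qed

definition fpart :: "'a set \<Rightarrow> 'a set" where
  "fpart X = cent G (SOME y. y \<in> X)"

lemma fpart_cl: assumes x: "x \<in> carrier G" "x \<notin> grp_center G"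
  shows "fpart (conj_class G x) = cent G x"
proof -
  have "\<exists>y. y \<in> conj_class G x" using conj_in_class[OF x(1)] by blast
  hence "(SOME y. y \<in> conj_class G x) \<in> conj_class G x" by (rule someI_ex)
  hence "cent G (SOME y. y \<in> conj_class G x) = cent G x" by (rule class_props(3)[OF x])
  thus ?thesis unfolding fpart_def .
qed

lemma class_disj: assumes x: "x \<in> carrier G" and w: "w \<in> carrier G"
  and ne: "conj_class G x \<noteq> conj_class G w"
  shows "conj_class G x \<inter> conj_class G w = {}"
proof (rule ccontr)
  assume "conj_class G x \<inter> conj_class G w \<noteq> {}"
  then obtain z where "z \<in> conj_class G x" "z \<in> conj_class G w" by auto
  hence "conj_class G z = conj_class G x" "conj_class G z = conj_class G w"
    using conj_class_eq[OF x] conj_class_eq[OF w] by blast+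
  thus False using ne by simp
qed

lemma adj_iff: assumes x: "x \<in> carrier G" "x \<notin> grp_center G" and y: "y \<in> carrier G" "y \<notin> grp_center G"
  shows "nccc_adj G (conj_class G x) (conj_class G y) \<longleftrightarrow> cent G x \<noteq> cent G y"
proof
  assume a: "nccc_adj G (conj_class G x) (conj_class G y)"
  show "cent G x \<noteq> cent G y"
  proof
    assume e: "cent G x = cent G y"
    have "y \<in> cent G x" using self_cent[OF y(1)] e by simp
    hence "y \<otimes> x = x \<otimes> y" unfolding cent_def by simp
    moreover have "x \<in> conj_class G x" "y \<in> conj_class G y" using conj_in_class x y by auto
    moreover have "\<forall>x'\<in>conj_class G x. \<forall>y'\<in>conj_class G y. x' \<otimes> y' \<noteq> y' \<otimes> x'"
      using a unfolding nccc_adj_def by simp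
    ultimately show False by metis
  qed
next
  assume ne: "cent G x \<noteq> cent G y"
  have "conj_class G x \<noteq> conj_class G y"
  proof
    assume "conj_class G x = conj_class G y"
    hence "fpart (conj_class G x) = fpart (conj_class G y)" by simp
    thus False using ne fpart_cl[OF x] fpart_cl[OF y] by simp
  qed
  moreover have "x' \<otimes> y' \<noteq> y' \<otimes> x'" if x': "x' \<in> conj_class G x" and y': "y' \<in> conj_class G y" for x' y'
  proof
    assume c: "x' \<otimes> y' = y' \<otimes> x'"
    have "cent G x' = cent G y'"
      using cent_eq[OF class_props(1,2)[OF x x'] class_props(1,2)[OF y y'] c] .
    thus False using class_props(3)[OF x x'] class_props(3)[OF y y'] ne by simp
  qed
  ultimately show "nccc_adj G (conj_class G x) (conj_class G y)" unfolding nccc_adj_def by blast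
qed

lemma V_iff: "X \<in> nccc_vertices G \<longleftrightarrow> (\<exists>x. x \<in> carrier G \<and> x \<notin> grp_center G \<and> X = conj_class G x)"
  unfolding nccc_vertices_def by auto

lemma finV: "finite (nccc_vertices G)"
proof -
  have "nccc_vertices G \<subseteq> Pow (carrier G)" using conj_class_carrier unfolding nccc_vertices_def by auto
  thus ?thesis using fin finite_subset by blast
qed

lemma finZ: "finite (grp_center G)" using fin Z_sub finite_subset by blast

lemma fiber: assumes x: "x \<in> carrier G" "x \<notin> grp_center G"
  shows "card {W\<in>nccc_vertices G. fpart W = cent G x} = (p - 1) * p ^ (m - 3)" and "m \<ge> 3"
proof -
  define F where "F = {W\<in>nccc_vertices G. fpart W = cent G x}"
  have finF: "finite F" using finV unfolding F_def by simp
  have U: "\<Union>F = cent G x - grp_center G"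
  proof
    show "\<Union>F \<subseteq> cent G x - grp_center G"
    proof
      fix z assume "z \<in> \<Union>F"
      then obtain W where W: "W \<in> F" "z \<in> W" by auto
      then obtain w where w: "w \<in> carrier G" "w \<notin> grp_center G" "W = conj_class G w" "fpart W = cent G x"
        unfolding F_def V_iff by auto
      have cw: "cent G w = cent G x" using w fpart_cl[OF w(1,2)] by simp
      have zw: "z \<in> conj_class G w" using W w by simp
      have "z \<in> cent G z" using self_cent class_props(1)[OF w(1,2) zw] by simp
      hence "z \<in> cent G x" using class_props(3)[OF w(1,2) zw] cw by simp
      thus "z \<in> cent G x - grp_center G" using class_props(2)[OF w(1,2) zw] by simp
    qed
    show "cent G x - grp_center G \<subseteq> \<Union>F"
    proof
      fix z assume z: "z \<in> cent G x - grp_center G"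
      hence zc: "z \<in> carrier G" using cent_carrier by auto
      have "z \<otimes> x = x \<otimes> z" using z unfolding cent_def by auto
      hence "cent G z = cent G x" using cent_eq[OF zc _ x] z by simp
      hence "conj_class G z \<in> F" unfolding F_def V_iff using zc z fpart_cl[OF zc] by auto
      moreover have "z \<in> conj_class G z" using conj_in_class[OF zc] .
      ultimately show "z \<in> \<Union>F" by auto
    qed
  qed
  have disj: "pairwise disjnt F"
    unfolding pairwise_def disjnt_def F_def V_iff using class_disj by auto
  have cardW: "card W = p" if "W \<in> F" for W
    using that class_size unfolding F_def V_iff by auto
  have finW: "finite W" if "W \<in> F" for W
    using that conj_class_carrier fin finite_subset unfolding F_def V_iff by blast
  have "card (\<Union>F) = sum card F" by (rule card_Union_disjoint[OF disj finW])
  also have "\<dots> = card F * p" using cardW by simp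
  finally have c1: "card F * p = card (cent G x - grp_center G)" using U by simp
  have "card (cent G x - grp_center G) = p ^ (m - 1) - p ^ (m - 2)"
    using card_Diff_subset[OF finZ Z_cent[OF x(1)]] cent_card[OF x] zc by simp
  hence c2: "card F * p = p ^ (m - 1) - p ^ (m - 2)" using c1 by simp
  have m2: "m \<ge> 2" using cent_card[OF x] by simp
  show m3: "m \<ge> 3"
  proof (rule ccontr)
    assume "\<not> m \<ge> 3"
    hence "m = 2" using m2 by simp
    hence cF: "card F * p = p - 1" using c2 by simp
    show False
    proof (cases "card F = 0")
      case True thus False using cF p1 by simp
    next
      case False hence "card F * p \<ge> p" by simp
      thus False using cF p1 by simp
    qed
  qed
  define q where "q = p ^ (m - 3)"
  have e2: "m - 2 = Suc (m - 3)" and e1: "m - 1 = Suc (Suc (m - 3))" using m3 by auto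
  have "p ^ (m - 2) = p * q" unfolding q_def e2 by simp
  moreover have "p ^ (m - 1) = p * (p * q)" unfolding q_def e1 by simp
  ultimately have "p ^ (m - 1) - p ^ (m - 2) = p * ((p - 1) * q)"
    by (simp add: diff_mult_distrib diff_mult_distrib2 mult.assoc)
  hence "card F * p = p * ((p - 1) * q)" using c2 by simp
  hence "card F = (p - 1) * q" using p1 by simp
  thus "card {W\<in>nccc_vertices G. fpart W = cent G x} = (p - 1) * p ^ (m - 3)" unfolding F_def q_def .
qed

lemma fpart_img: "fpart ` nccc_vertices G = {cent G x | x. x \<in> carrier G \<and> x \<notin> grp_center G}"
proof
  show "fpart ` nccc_vertices G \<subseteq> {cent G x | x. x \<in> carrier G \<and> x \<notin> grp_center G}"
  proof
    fix A assume "A \<in> fpart ` nccc_vertices G"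
    then obtain X where X: "X \<in> nccc_vertices G" "A = fpart X" by auto
    then obtain x where x: "x \<in> carrier G" "x \<notin> grp_center G" "X = conj_class G x" unfolding V_iff by auto
    show "A \<in> {cent G x | x. x \<in> carrier G \<and> x \<notin> grp_center G}"
      using fpart_cl[OF x(1,2)] x X by auto
  qed
  show "{cent G x | x. x \<in> carrier G \<and> x \<notin> grp_center G} \<subseteq> fpart ` nccc_vertices G"
  proof
    fix A assume "A \<in> {cent G x | x. x \<in> carrier G \<and> x \<notin> grp_center G}"
    then obtain x where x: "x \<in> carrier G" "x \<notin> grp_center G" "A = cent G x" by auto
    hence "conj_class G x \<in> nccc_vertices G" unfolding V_iff by auto
    moreover have "fpart (conj_class G x) = A" using fpart_cl[OF x(1,2)] x(3) by simp
    ultimately show "A \<in> fpart ` nccc_vertices G" by (metis imageI)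
  qed
qed

lemma parts: assumes x0: "x0 \<in> carrier G" "x0 \<notin> grp_center G"
  shows "card (fpart ` nccc_vertices G) = p + 1"
proof -
  define P where "P = {cent G x | x. x \<in> carrier G \<and> x \<notin> grp_center G}"
  have finP: "finite P" using finV fpart_img unfolding P_def by (metis finite_imageI)
  have U: "(\<Union>A\<in>P. A - grp_center G) = carrier G - grp_center G"
  proof
    show "(\<Union>A\<in>P. A - grp_center G) \<subseteq> carrier G - grp_center G"
      unfolding P_def using cent_carrier by blast
    show "carrier G - grp_center G \<subseteq> (\<Union>A\<in>P. A - grp_center G)"
    proof
      fix z assume z: "z \<in> carrier G - grp_center G"
      hence "cent G z \<in> P" unfolding P_def by auto
      moreover have "z \<in> cent G z - grp_center G" using z self_cent by auto
      ultimately show "z \<in> (\<Union>A\<in>P. A - grp_center G)" by blast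
    qed
  qed
  have disj: "\<forall>A\<in>P. \<forall>B\<in>P. A \<noteq> B \<longrightarrow> (A - grp_center G) \<inter> (B - grp_center G) = {}"
  proof (intro ballI impI)
    fix A B assume A: "A \<in> P" and B: "B \<in> P" and ne: "A \<noteq> B"
    obtain a where a: "a \<in> carrier G" "a \<notin> grp_center G" "A = cent G a" using A unfolding P_def by auto
    obtain b where b: "b \<in> carrier G" "b \<notin> grp_center G" "B = cent G b" using B unfolding P_def by auto
    show "(A - grp_center G) \<inter> (B - grp_center G) = {}"
    proof (rule ccontr)
      assume "(A - grp_center G) \<inter> (B - grp_center G) \<noteq> {}"
      then obtain w where w: "w \<in> A" "w \<in> B" "w \<notin> grp_center G" by auto
      have wc: "w \<in> carrier G" using w(1) a(3) cent_carrier by auto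
      have "w \<otimes> a = a \<otimes> w" using w(1) a(3) unfolding cent_def by auto
      hence "cent G w = A" using cent_eq[OF wc w(3) a(1,2)] a(3) by simp
      moreover have "w \<otimes> b = b \<otimes> w" using w(2) b(3) unfolding cent_def by auto
      hence "cent G w = B" using cent_eq[OF wc w(3) b(1,2)] b(3) by simp
      ultimately show False using ne by simp
    qed
  qed
  have finD: "\<forall>A\<in>P. finite (A - grp_center G)"
    unfolding P_def using cent_carrier fin finite_subset by blast
  have cardA: "card (A - grp_center G) = p ^ (m - 1) - p ^ (m - 2)" if AP: "A \<in> P" for A
  proof -
    obtain a where a: "a \<in> carrier G" "a \<notin> grp_center G" "A = cent G a" using AP unfolding P_def by auto
    show ?thesis using card_Diff_subset[OF finZ Z_cent[OF a(1)]] cent_card[OF a(1,2)] zc a(3) by simp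
  qed
  have "card (carrier G - grp_center G) = (\<Sum>A\<in>P. card (A - grp_center G))"
    unfolding U[symmetric] by (rule card_UN_disjoint[OF finP finD disj])
  also have "\<dots> = card P * (p ^ (m - 1) - p ^ (m - 2))" using cardA by simp
  finally have c1: "card P * (p ^ (m - 1) - p ^ (m - 2)) = p ^ m - p ^ (m - 2)"
    using card_Diff_subset[OF finZ Z_sub] ord zc by simp
  have m3: "m \<ge> 3" using fiber(2)[OF x0] .
  define r where "r = p ^ (m - 2)"
  have e1: "m - 1 = Suc (m - 2)" and e0: "m = Suc (Suc (m - 2))" using m3 by auto
  have r1: "p ^ (m - 1) = p * r" unfolding r_def e1 by simp
  have r0: "p ^ m = p * (p * r)" unfolding r_def by (subst e0) simp
  have rpos: "r > 0" using p1 by (simp add: r_def)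
  define X where "X = (p - 1) * r"
  have hX: "card P * X = (p + 1) * X"
    using c1 unfolding r1 r0 r_def[symmetric] X_def
    by (simp add: diff_mult_distrib diff_mult_distrib2 algebra_simps)
  moreover have "X > 0" using p1 rpos by (simp add: X_def)
  ultimately have "card P = p + 1" using mult_right_cancel[of X "card P" "p + 1"] by simp
  thus ?thesis using fpart_img P_def by simp
qed

end
theorem corollary2p4:
  fixes G :: "('a, 'b) monoid_scheme" and p m :: nat
  assumes "group G" and "finite (carrier G)" and "prime p"
    and "card (carrier G) = p ^ m"
    and "\<not> comm_group G"
    and "card (grp_center G) = p ^ (m - 2)"
  defines "V \<equiv> nccc_vertices G" and "E \<equiv> nccc_adj G"
  shows "mat_spec (adj_mat V E) =
           replicate_mset ((p + 1) * ((p - 1) * p ^ (m - 3) - 1)) 0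
         + replicate_mset p (- (real (p - 1) * real p ^ (m - 3)))
         + {# real (p - 1) * real p ^ (m - 2) #} \<and>
         mat_spec (lap_mat V E) =
           {# 0 #}
         + replicate_mset ((p + 1) * ((p - 1) * p ^ (m - 3) - 1)) (real (p - 1) * real p ^ (m - 2))
         + replicate_mset p ((real p ^ 2 - 1) * real p ^ (m - 3)) \<and>
         mat_spec (slap_mat V E) =
           replicate_mset ((p + 1) * ((p - 1) * p ^ (m - 3) - 1)) (real (p - 1) * real p ^ (m - 2))
         + replicate_mset p (real (p - 1) ^ 2 * real p ^ (m - 3))
         + {# 2 * real (p - 1) * real p ^ (m - 2) #} \<and>
         graph_energy V E = 2 * real (p - 1) * real p ^ (m - 2) \<and>
         lap_energy V E = 2 * real (p - 1) * real p ^ (m - 2) \<and>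
         slap_energy V E = 2 * real (p - 1) * real p ^ (m - 2)"
  proof -
  interpret pg G p m
    using assms(1,2,3,4,6) by (simp add: pg_def pg_axioms_def)
  obtain x0 where x0: "x0 \<in> carrier G" "x0 \<notin> grp_center G"
  proof -
    have "\<exists>x0. x0 \<in> carrier G \<and> x0 \<notin> grp_center G"
    proof (rule ccontr)
      assume "\<not> (\<exists>x0. x0 \<in> carrier G \<and> x0 \<notin> grp_center G)"
      hence "\<And>x y. x \<in> carrier G \<Longrightarrow> y \<in> carrier G \<Longrightarrow> x \<otimes>\<^bsub>G\<^esub> y = y \<otimes>\<^bsub>G\<^esub> x"
        unfolding grp_center_def by auto
      hence "comm_group G" by (rule group_comm_groupI)
      thus False using assms(5) by simp
    qed
    thus thesis using that by blast
  qed
  have m3: "m \<ge> 3" using fiber(2)[OF x0] .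
  have p1: "p > 1" by (rule p1)
  define n where "n = (p - 1) * p ^ (m - 3)"
  have adj: "E u v \<longleftrightarrow> fpart u \<noteq> fpart v" if uv: "u \<in> V" "v \<in> V" for u v
  proof -
    obtain x where x: "x \<in> carrier G" "x \<notin> grp_center G" "u = conj_class G x" using uv(1) unfolding V_def V_iff by auto
    obtain y where y: "y \<in> carrier G" "y \<notin> grp_center G" "v = conj_class G y" using uv(2) unfolding V_def V_iff by auto
    show ?thesis unfolding E_def x(3) y(3) adj_iff[OF x(1,2) y(1,2)] fpart_cl[OF x(1,2)] fpart_cl[OF y(1,2)] ..
  qed
  have fib: "card {w\<in>V. fpart w = fpart u} = n" if uV: "u \<in> V" for u
  proof -
    obtain x where x: "x \<in> carrier G" "x \<notin> grp_center G" "u = conj_class G x" using uV unfolding V_def V_iff by auto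
    show ?thesis unfolding x(3) fpart_cl[OF x(1,2)] V_def n_def by (rule fiber(1)[OF x(1,2)])
  qed
  have kk: "card (fpart ` V) = p + 1" unfolding V_def by (rule parts[OF x0])
  have n1: "n \<ge> 1" using p1 by (simp add: n_def)
  have k2: "p + 1 \<ge> 2" using p1 by simp
  have fV: "finite V" unfolding V_def by (rule finV)
  note GM = graph_main[OF fV adj fib kk k2 n1]
  have e2: "m - 2 = Suc (m - 3)" using m3 by auto
  have hn: "real n = real (p - 1) * real p ^ (m - 3)" by (simp add: n_def)
  have hd: "real ((p + 1 - 1) * n) = real (p - 1) * real p ^ (m - 2)"
    by (simp add: n_def e2)
  have hdn: "real ((p + 1 - 1) * n) + real n = (real p ^ 2 - 1) * real p ^ (m - 3)"
    using p1 by (simp add: n_def e2 of_nat_diff power2_eq_square algebra_simps)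
  have hd_n: "real ((p + 1 - 1) * n) - real n = real (p - 1) ^ 2 * real p ^ (m - 3)"
    using p1 by (simp add: n_def e2 of_nat_diff power2_eq_square algebra_simps)
  have hd2: "2 * real (p - 1) * real p ^ (m - 2) = 2 * real ((p + 1 - 1) * n)"
    using hd by simp
  have kn: "(p + 1) * (n - 1) = (p + 1) * ((p - 1) * p ^ (m - 3) - 1)" by (simp add: n_def)
  have s1: "mat_spec (adj_mat V E) =
           replicate_mset ((p + 1) * ((p - 1) * p ^ (m - 3) - 1)) 0
         + replicate_mset p (- (real (p - 1) * real p ^ (m - 3)))
         + {# real (p - 1) * real p ^ (m - 2) #}"
    using GM(1) unfolding kn hn[symmetric] hd[symmetric] by simp
  have s2: "mat_spec (lap_mat V E) =
           {# 0 #}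
         + replicate_mset ((p + 1) * ((p - 1) * p ^ (m - 3) - 1)) (real (p - 1) * real p ^ (m - 2))
         + replicate_mset p ((real p ^ 2 - 1) * real p ^ (m - 3))"
    using GM(2) unfolding kn hdn[symmetric] hd[symmetric] by (simp add: ac_simps)
  have s3: "mat_spec (slap_mat V E) =
           replicate_mset ((p + 1) * ((p - 1) * p ^ (m - 3) - 1)) (real (p - 1) * real p ^ (m - 2))
         + replicate_mset p (real (p - 1) ^ 2 * real p ^ (m - 3))
         + {# 2 * real (p - 1) * real p ^ (m - 2) #}"
    using GM(3) unfolding kn hd_n[symmetric] hd2 hd[symmetric] by (simp add: ac_simps)
  have en: "2 * real ((p + 1 - 1) * n) = 2 * real (p - 1) * real p ^ (m - 2)" using hd by simp
  show ?thesis using s1 s2 s3 GM(5) GM(6) GM(7) unfolding en by simp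
qed

end
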